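(* Let $\boldsymbol{m}=(m_1,m_2)\in\mathbb{N}^2$ and $g=\gcd(m_1,m_2)$. For every $l\in\{0,\dots,4m_1m_2/g-1\}$ and $\rho\in\{0,\dots,2g-1\}$ there exist $\boldsymbol{i}\in\mathrm{I}^{(\boldsymbol{m})}$ and $u,v\in\{-1,1\}$ with \[ i_1\equiv u\big(vl+(1-v)m_1\big)\pmod{4m_1},\qquad i_2\equiv l-2\rho-(1-v)m_2\pmod{4m_2}. \] The index $\boldsymbol{i}$ is uniquely determined by $(l,\rho)$ through these congruences, and the resulting map $(l,\rho)\mapsto\boldsymbol{i}(l,\rho)$ from $\{0,\dots,4m_1m_2/g-1\}\times\{0,\dots,2g-1\}$ to $\mathrm{I}^{(\boldsymbol{m})}$ is surjective. Moreover $\boldsymbol{i}(l,\rho)\in\mathrm{I}^{(\boldsymbol{m})}_0$ if and only if $l$ is even, and $\boldsymbol{i}(l,\rho)\in\mathrm{I}^{(\boldsymbol{m})}_1$ if and only if $l$ is odd. With the additional convention that $u=1$ if $l\equiv0\pmod{4m_1}$ and $u=-1$ if $l\equiv 2m_1\pmod{4m_1}$, the numbers $u,v$ are uniquely determined by the two congruences, and for every $\boldsymbol{i}\in\mathrm{I}^{(\boldsymbol{m})}$ \[\#\{(l,\rho):\ \boldsymbol{i}(l,\rho)=\boldsymbol{i}\}=\begin{cases}4,& 0<i_1\le m_1,\\ 2,& i_1=0.\end{cases}\]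
   Context: Nodal index set: $\mathrm{I}^{(\boldsymbol{m})}=\{(i_1,i_2)\in\mathbb{Z}^2:\ 0\le i_1\le m_1,\ -2m_2<i_2\le 2m_2,\ i_2\le0\text{ if }i_1=m_1,\ i_1+i_2\text{ even}\}$, with subsets $\mathrm{I}^{(\boldsymbol{m})}_0=\{\boldsymbol{i}\in\mathrm{I}^{(\boldsymbol{m})}: i_1,i_2\text{ even}\}$ and $\mathrm{I}^{(\boldsymbol{m})}_1=\{\boldsymbol{i}\in\mathrm{I}^{(\boldsymbol{m})}: i_1,i_2\text{ odd}\}$. *)

theory Defs
  imports "HOL-Number_Theory.Number_Theory"
begin

definition nodeI :: "nat \<Rightarrow> nat \<Rightarrow> (int \<times> int) set" where
  "nodeI m1 m2 = {(i1, i2). 0 \<le> i1 \<and> i1 \<le> int m1 \<and> - 2 * int m2 < i2 \<and> i2 \<le> 2 * int m2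
      \<and> (i1 = int m1 \<longrightarrow> i2 \<le> 0) \<and> even (i1 + i2)}"

definition nodeI0 :: "nat \<Rightarrow> nat \<Rightarrow> (int \<times> int) set" where
  "nodeI0 m1 m2 = {i \<in> nodeI m1 m2. even (fst i) \<and> even (snd i)}"

definition nodeI1 :: "nat \<Rightarrow> nat \<Rightarrow> (int \<times> int) set" where
  "nodeI1 m1 m2 = {i \<in> nodeI m1 m2. odd (fst i) \<and> odd (snd i)}"

definition paramD :: "nat \<Rightarrow> nat \<Rightarrow> (nat \<times> nat) set" where
  "paramD m1 m2 = {0..<4 * m1 * m2 div gcd m1 m2} \<times> {0..<2 * gcd m1 m2}"

definition cong_rel :: "nat \<Rightarrow> nat \<Rightarrow> nat \<Rightarrow> nat \<Rightarrow> int \<times> int \<Rightarrow> int \<Rightarrow> int \<Rightarrow> bool" where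
  "cong_rel m1 m2 l \<rho> i u v \<longleftrightarrow>
     [fst i = u * (v * int l + (1 - v) * int m1)] (mod (4 * int m1)) \<and>
     [snd i = int l - 2 * int \<rho> - (1 - v) * int m2] (mod (4 * int m2))"

definition attached :: "nat \<Rightarrow> nat \<Rightarrow> nat \<Rightarrow> nat \<Rightarrow> int \<times> int \<Rightarrow> bool" where
  "attached m1 m2 l \<rho> i \<longleftrightarrow> (\<exists>u\<in>{-1, 1}. \<exists>v\<in>{-1, 1}. cong_rel m1 m2 l \<rho> i u v)"

end

theory Submission
  imports Defs
begin

lemma small_k:
  fixes m k :: int
  assumes "m > 0" "-2*m < m*k" "m*k < 2*m"
  shows "k = -1 \<or> k = 0 \<or> k = 1"
proof -
  have "k < 2" using assms(1,3) by (metis mult.commute mult_less_cancel_left_pos)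
  moreover have "-2 < k" using assms(1,2)
    by (metis mult.commute mult_less_cancel_left_pos mult_minus_right mult_2 minus_add_distrib) 
  ultimately show ?thesis by linarith
qed

lemma FC:
  fixes M a a' u v u' v' :: int
  assumes M: "M > 0" and uv: "u \<in> {-1,1}" "v \<in> {-1,1}" "u' \<in> {-1,1}" "v' \<in> {-1,1}"
    and a: "0 \<le> a" "a \<le> M" "0 \<le> a'" "a' \<le> M"
    and c: "[u*v*a + (1-v)*M = u'*v'*a' + (1-v')*M] (mod 4*M)"
  shows "a = a' \<and> (v \<noteq> v' \<longrightarrow> a = M) \<and> (v = v' \<and> u \<noteq> u' \<longrightarrow> a = 0)"
proof -
  obtain k where k: "u'*v'*a' + (1-v')*M = u*v*a + (1-v)*M + (4*M)*k"
    using c unfolding cong_iff_lin by blast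
  have e: "(4*M)*k = u'*v'*a' + (1-v')*M - (u*v*a + (1-v)*M)" using k by linarith
  have r1: "-2*(4*M) < u'*v'*a' + (1-v')*M - (u*v*a + (1-v)*M)"
   and r2: "u'*v'*a' + (1-v')*M - (u*v*a + (1-v)*M) < 2*(4*M)"
    using uv a M by auto
  have b1: "-2*(4*M) < (4*M)*k" and b2: "(4*M)*k < 2*(4*M)" using e r1 r2 by simp_all
  have "k = -1 \<or> k = 0 \<or> k = 1" using small_k[OF _ b1 b2] M by simp
  then show ?thesis using k uv a M by (auto simp: algebra_simps)
qed

lemma SC:
  fixes M b b' v v' :: int
  assumes M: "M > 0" and uv: "v \<in> {-1,1}" "v' \<in> {-1,1}"
    and b: "-2*M < b" "b \<le> 2*M" "-2*M < b'" "b' \<le> 2*M"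
    and c: "[b + (1-v)*M = b' + (1-v')*M] (mod 4*M)"
  shows "(v = v' \<longrightarrow> b = b') \<and> (v \<noteq> v' \<longrightarrow> \<not> (b \<le> 0 \<and> b' \<le> 0))"
proof -
  obtain k where k: "b' + (1-v')*M = b + (1-v)*M + (4*M)*k"
    using c unfolding cong_iff_lin by blast
  have e: "(4*M)*k = b' + (1-v')*M - (b + (1-v)*M)" using k by linarith
  have r1: "-2*(4*M) < b' + (1-v')*M - (b + (1-v)*M)"
   and r2: "b' + (1-v')*M - (b + (1-v)*M) < 2*(4*M)"
    using uv b M by auto
  have b1: "-2*(4*M) < (4*M)*k" and b2: "(4*M)*k < 2*(4*M)" using e r1 r2 by simp_all
  have "k = -1 \<or> k = 0 \<or> k = 1" using small_k[OF _ b1 b2] M by simp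
  then show ?thesis using k uv b M by (auto simp: algebra_simps)
qed

lemma EQ:
  assumes "u \<in> {-1,1}" "v \<in> {-1,1}"
  shows "cong_rel m1 m2 l \<rho> i u v \<longleftrightarrow>
    ([int l = u*v*fst i + (1-v)*int m1] (mod 4*int m1) \<and>
     [int l - 2*int \<rho> = snd i + (1-v)*int m2] (mod 4*int m2))"
proof -
  define A where "A = fst i - u * (v * int l + (1 - v) * int m1)"
  define B where "B = int l - (u*v*fst i + (1-v)*int m1)"
  have AB: "B = -(u*v)*A" and BA: "A = -(u*v)*B"
    using assms unfolding A_def B_def by (auto simp: algebra_simps)
  have 1: "(4*int m1) dvd A \<longleftrightarrow> (4*int m1) dvd B"
    using AB BA by (metis dvd_mult)
  define A2 where "A2 = snd i - (int l - 2 * int \<rho> - (1 - v) * int m2)"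
  define B2 where "B2 = int l - 2*int \<rho> - (snd i + (1-v)*int m2)"
  have "B2 = - A2" unfolding A2_def B2_def by simp
  then have 2: "(4*int m2) dvd A2 \<longleftrightarrow> (4*int m2) dvd B2" by simp
  show ?thesis unfolding cong_rel_def cong_iff_dvd_diff
    using 1 2 unfolding A_def B_def A2_def B2_def by simp
qed

lemma PAR1:
  fixes l i1 u v M :: int
  assumes "u \<in> {-1,1}" "v \<in> {-1,1}" "[l = u*v*i1 + (1-v)*M] (mod 4*M)"
  shows "even (l - i1)"
proof -
  have "(4*M) dvd (l - (u*v*i1 + (1-v)*M))" using assms(3) by (simp add: cong_iff_dvd_diff)
  then have "2 dvd (l - (u*v*i1 + (1-v)*M))"
    by (rule dvd_trans[rotated]) (simp add: dvd_mult2)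
  moreover have "2 dvd ((u*v*i1 + (1-v)*M) - i1)" using assms(1,2) by auto
  ultimately have "2 dvd ((l - (u*v*i1 + (1-v)*M)) + ((u*v*i1 + (1-v)*M) - i1))"
    by (rule dvd_add)
  then show ?thesis by simp
qed

lemma PAR2:
  fixes l r i2 v M :: int
  assumes "v \<in> {-1,1}" "[l - 2*r = i2 + (1-v)*M] (mod 4*M)"
  shows "even (l - i2)"
proof -
  have "(4*M) dvd (l - 2*r - (i2 + (1-v)*M))" using assms(2) by (simp add: cong_iff_dvd_diff)
  then have "2 dvd (l - 2*r - (i2 + (1-v)*M))"
    by (rule dvd_trans[rotated]) (simp add: dvd_mult2)
  moreover have "2 dvd (2*r + (1-v)*M)" using assms(1) by auto
  ultimately have "2 dvd ((l - 2*r - (i2 + (1-v)*M)) + (2*r + (1-v)*M))"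
    by (rule dvd_add)
  then show ?thesis by simp
qed

lemma REP:
  fixes M x :: int
  assumes "M > 0"
  shows "\<exists>y. [x = y] (mod 4*M) \<and> -2*M < y \<and> y \<le> 2*M"
proof -
  define y where "y = 2*M - ((2*M - x) mod (4*M))"
  have "(2*M - x) div (4*M) * (4*M) + (2*M - x) mod (4*M) = 2*M - x" by (rule div_mult_mod_eq)
  then have "y = x + (4*M) * ((2*M - x) div (4*M))" unfolding y_def by (simp add: algebra_simps)
  then have "[x = y] (mod 4*M)" unfolding cong_iff_lin by blast
  moreover have "0 \<le> (2*M - x) mod (4*M)" "(2*M - x) mod (4*M) < 4*M" using assms by auto
  ultimately show ?thesis unfolding y_def by auto
qed

lemma REPneg:
  fixes M x :: int
  assumes "M > 0"
  shows "\<exists>v\<in>{-1,1}. \<exists>y. [x - (1-v)*M = y] (mod 4*M) \<and> -2*M < y \<and> y \<le> 0"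
proof -
  obtain y where y: "[x = y] (mod 4*M)" "-2*M < y" "y \<le> 2*M" using REP[OF assms] by blast
  show ?thesis
  proof (cases "y \<le> 0")
    case True then show ?thesis using y by (intro bexI[of _ 1]) auto
  next
    case False
    have "[x - 2*M = y - 2*M] (mod 4*M)" using y(1) by (simp add: cong_diff)
    then show ?thesis using y False by (intro bexI[of _ "-1"]) (auto intro!: exI[of _ "y - 2*M"])
  qed
qed

lemma shift:
  fixes x c y n :: int
  assumes "[x - c = y] (mod n)" shows "[x = y + c] (mod n)"
  using assms by (simp add: cong_iff_dvd_diff algebra_simps)

lemma Lval:
  assumes "0 < m1" "0 < m2"
  shows "int (4 * m1 * m2 div gcd m1 m2) = 4 * lcm (int m1) (int m2)"
proof -
  have "gcd m1 m2 dvd m1 * m2" by (simp add: dvd_mult2)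
  then have "4 * m1 * m2 div gcd m1 m2 = 4 * (m1 * m2 div gcd m1 m2)"
    by (metis div_mult_swap mult.assoc)
  also have "\<dots> = 4 * lcm m1 m2" by (simp add: lcm_nat_def)
  finally show ?thesis by (simp add: lcm_int_int_eq)
qed

lemma Ldvd:
  fixes M1 M2 d :: int
  assumes "4*M1 dvd d" "4*M2 dvd d"
  shows "4 * lcm M1 M2 dvd d"
proof -
  obtain k where k: "d = 4*M1*k" using assms(1) by blast
  have "4*M2 dvd 4*(M1*k)" using assms(2) k by (simp add: mult.assoc)
  then have "M2 dvd M1*k" by (simp add: dvd_mult_cancel_left)
  then have "lcm M1 M2 dvd M1*k" by (intro lcm_least) simp_all
  then have "4 * lcm M1 M2 dvd 4*(M1*k)" by (simp add: dvd_mult_cancel_left)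
  then show ?thesis using k by (simp add: mult.assoc)
qed

lemma KL:
  fixes m1 m2 :: nat and a b :: int
  assumes m: "0 < m1" "0 < m2" and ev: "even (a - b)"
  shows "\<exists>!p. p \<in> paramD m1 m2 \<and> [int (fst p) = a] (mod 4*int m1)
           \<and> [int (fst p) - 2*int (snd p) = b] (mod 4*int m2)"
proof -
  define M1 where "M1 = int m1"
  define M2 where "M2 = int m2"
  define G where "G = int (gcd m1 m2)"
  define L where "L = int (4 * m1 * m2 div gcd m1 m2)"
  have M1p: "M1 > 0" and M2p: "M2 > 0" using m by (auto simp: M1_def M2_def)
  have Gp: "G > 0" using m by (simp add: G_def)
  have GM: "G = gcd M1 M2" by (simp add: G_def M1_def M2_def gcd_int_int_eq)
  have L4: "L = 4 * lcm M1 M2" using Lval[OF m] by (simp add: L_def M1_def M2_def)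
  have Lp: "L > 0" using L4 M1p M2p by (simp add: lcm_pos_int)
  have d1: "4*M1 dvd L" unfolding L4 by (simp add: dvd_mult_cancel_left)
  have d2: "4*M2 dvd L" unfolding L4 by (simp add: dvd_mult_cancel_left)
  have g1: "4*G dvd 4*M1" "4*G dvd 4*M2" unfolding GM by (simp_all add: dvd_mult_cancel_left)
  have pd: "p \<in> paramD m1 m2 \<longleftrightarrow> 0 \<le> int (fst p) \<and> int (fst p) < L \<and> int (snd p) < 2*G" for p
    unfolding paramD_def L_def G_def by (cases p) auto
  show ?thesis
  proof (rule ex_ex1I)
    define h where "h = (a - b) div 2"
    have h2: "a - b = 2*h" using ev unfolding h_def by simp
    define R where "R = h mod (2*G)"
    define t where "t = h div (2*G)"
    have Rt: "h = 2*G*t + R" unfolding R_def t_def by simp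
    have R0: "0 \<le> R" "R < 2*G" using Gp unfolding R_def by auto
    define c where "c = b + 2*R"
    have ac: "a - c = 4*G*t" using h2 Rt unfolding c_def by (simp add: algebra_simps)
    obtain x y where xy: "x*M1 + y*M2 = G" using bezout_int[of M1 M2] GM by auto
    define l0 where "l0 = a - 4*M1*x*t"
    have l0c: "c = l0 + 4*M2*(-y*t)"
    proof -
      have "c = a - 4*G*t" using ac by simp
      also have "\<dots> = a - 4*(x*M1 + y*M2)*t" using xy by simp
      finally show ?thesis unfolding l0_def by (simp add: algebra_simps)
    qed
    define l where "l = nat (l0 mod L)"
    have il: "int l = l0 mod L" unfolding l_def using Lp by simp
    have cL: "[int l = l0] (mod L)" unfolding il cong_def by simp
    have c1: "[int l = a] (mod 4*M1)"
    proof -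
      have "[int l = l0] (mod 4*M1)" using cL d1 by (rule cong_dvd_modulus)
      moreover have "[l0 = a] (mod 4*M1)" unfolding cong_iff_lin l0_def
        by (intro exI[of _ "x*t"]) (simp add: algebra_simps)
      ultimately show ?thesis by (rule cong_trans)
    qed
    have c2: "[int l - 2*R = b] (mod 4*M2)"
    proof -
      have "[int l = l0] (mod 4*M2)" using cL d2 by (rule cong_dvd_modulus)
      moreover have "[l0 = c] (mod 4*M2)" unfolding cong_iff_lin using l0c by blast
      ultimately have "[int l = c] (mod 4*M2)" by (rule cong_trans)
      then have "[int l - 2*R = c - 2*R] (mod 4*M2)" by (simp add: cong_diff)
      then show ?thesis unfolding c_def by simp
    qed
    have "int l < L" "int (nat R) < 2*G" using il Lp R0 by auto
    then have "(l, nat R) \<in> paramD m1 m2" using pd by simp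
    then show "\<exists>p. p \<in> paramD m1 m2 \<and> [int (fst p) = a] (mod 4*int m1)
           \<and> [int (fst p) - 2*int (snd p) = b] (mod 4*int m2)"
      using c1 c2 R0 by (intro exI[of _ "(l, nat R)"]) (simp add: M1_def M2_def)
  next
    fix p q
    assume p: "p \<in> paramD m1 m2 \<and> [int (fst p) = a] (mod 4*int m1)
           \<and> [int (fst p) - 2*int (snd p) = b] (mod 4*int m2)"
      and q: "q \<in> paramD m1 m2 \<and> [int (fst q) = a] (mod 4*int m1)
           \<and> [int (fst q) - 2*int (snd q) = b] (mod 4*int m2)"
    obtain l r where pl: "p = (l, r)" by (cases p)
    obtain l' r' where ql: "q = (l', r')" by (cases q)
    have e1: "[int l = int l'] (mod 4*M1)" using p q unfolding pl ql M1_def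
      by (auto intro: cong_trans cong_sym)
    have e2: "[int l - 2*int r = int l' - 2*int r'] (mod 4*M2)" using p q unfolding pl ql M2_def
      by (auto intro: cong_trans cong_sym)
    have "4*M1 dvd (int l - int l')" using e1 by (simp add: cong_iff_dvd_diff)
    then have f1: "4*G dvd (int l - int l')" using dvd_trans[OF g1(1)] by blast
    have "4*M2 dvd (int l - 2*int r - (int l' - 2*int r'))" using e2 by (simp add: cong_iff_dvd_diff)
    then have f2: "4*G dvd (int l - 2*int r - (int l' - 2*int r'))" using dvd_trans[OF g1(2)] by blast
    have "4*G dvd (int l - int l') - (int l - 2*int r - (int l' - 2*int r'))"
      using f1 f2 by (rule dvd_diff)
    moreover have "(int l - int l') - (int l - 2*int r - (int l' - 2*int r')) = 2*(int r - int r')"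
      by simp
    ultimately obtain z where z: "2*(int r - int r') = 4*G*z" by (metis dvdE)
    then have "int r - int r' = 2*G*z" by (simp add: algebra_simps)
    then have "2*G dvd (int r - int r')" by simp
    then have "[int r = int r'] (mod 2*G)" by (simp add: cong_iff_dvd_diff)
    moreover have "int r < 2*G" "int r' < 2*G" using p q pd unfolding pl ql by auto
    ultimately have "int r = int r'" by (intro cong_less_imp_eq_int) auto
    then have rr: "r = r'" by simp
    have "4*M2 dvd (int l - int l')" using e2 rr by (simp add: cong_iff_dvd_diff)
    moreover have "4*M1 dvd (int l - int l')" using e1 by (simp add: cong_iff_dvd_diff)
    ultimately have "L dvd (int l - int l')" using Ldvd L4 by simp
    then have "[int l = int l'] (mod L)" by (simp add: cong_iff_dvd_diff)
    moreover have "int l < L" "int l' < L" using p q pd unfolding pl ql by auto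
    ultimately have "int l = int l'" by (intro cong_less_imp_eq_int) auto
    then show "p = q" using rr pl ql by simp
  qed
qed

lemma EX1:
  fixes m1 m2 l \<rho> :: nat
  assumes m: "0 < m1" "0 < m2"
  shows "\<exists>u v i1 i2. u \<in> {-1,1} \<and> v \<in> {-1,1} \<and> 0 \<le> i1 \<and> i1 \<le> int m1
     \<and> -2*int m2 < i2 \<and> i2 \<le> 2*int m2 \<and> (i1 = int m1 \<longrightarrow> i2 \<le> 0)
     \<and> [int l = u*v*i1 + (1-v)*int m1] (mod 4*int m1)
     \<and> [int l - 2*int \<rho> = i2 + (1-v)*int m2] (mod 4*int m2)
     \<and> (l mod (4*m1) = 0 \<longrightarrow> u = 1) \<and> (l mod (4*m1) = 2*m1 \<longrightarrow> u = -1)"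
  (is "\<exists>u v i1 i2. ?P u v i1 i2")
proof -
  define M1 where "M1 = int m1"
  define M2 where "M2 = int m2"
  have M1p: "M1 > 0" and M2p: "M2 > 0" using m by (auto simp: M1_def M2_def)
  define r where "r = int l mod (4*M1)"
  have r0: "0 \<le> r" "r < 4*M1" using M1p unfolding r_def by auto
  have lr: "[int l = r] (mod 4*M1)" unfolding r_def cong_def by simp
  have rn: "int (l mod (4*m1)) = r" unfolding r_def M1_def by (simp add: of_nat_mod)
  have conv0: "l mod (4*m1) = 0 \<longleftrightarrow> r = 0" using rn by linarith
  have conv2: "l mod (4*m1) = 2*m1 \<longleftrightarrow> r = 2*M1" using rn unfolding M1_def by linarith
  have C1: "[int l = e] (mod 4*M1)" if "e = r \<or> e = r - 4*M1" for e
  proof -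
    have "[r = e] (mod 4*M1)" using that unfolding cong_iff_lin
      by (auto intro: exI[of _ 0] exI[of _ "-1"])
    then show ?thesis using lr by (rule cong_trans[rotated])
  qed
  define x where "x = int l - 2*int \<rho>"
  have main: "\<exists>u v i1 i2. ?P u v i1 i2"
    if uv: "u \<in> {-1,1}" "v \<in> {-1,1}" and i1: "0 \<le> i1" "i1 < M1"
      and c: "[int l = u*v*i1 + (1-v)*M1] (mod 4*M1)"
      and cv: "r = 0 \<longrightarrow> u = 1" "r = 2*M1 \<longrightarrow> u = -1" for u v i1
  proof -
    obtain y where y: "[x - (1-v)*M2 = y] (mod 4*M2)" "-2*M2 < y" "y \<le> 2*M2"
      using REP[OF M2p] by blast
    have y2: "[x = y + (1-v)*M2] (mod 4*M2)" using y(1) by (rule shift)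
    show ?thesis
    proof (rule exI[of _ u], rule exI[of _ v], rule exI[of _ i1], rule exI[of _ y], intro conjI)
      show "[int l = u * v * i1 + (1 - v) * int m1] (mod 4 * int m1)" using c unfolding M1_def .
      show "[int l - 2 * int \<rho> = y + (1 - v) * int m2] (mod 4 * int m2)" using y2 unfolding x_def M2_def .
      show "l mod (4 * m1) = 0 \<longrightarrow> u = 1" using conv0 cv by simp
      show "l mod (4 * m1) = 2 * m1 \<longrightarrow> u = - 1" using conv2 cv by simp
      show "i1 = int m1 \<longrightarrow> y \<le> 0" using i1 unfolding M1_def by simp
    qed (use uv i1 y in \<open>simp_all add: M1_def M2_def\<close>)
  qed
  have mainM: "\<exists>u v i1 i2. ?P u v i1 i2"
    if u: "u \<in> {-1,1}" and c: "\<And>v. v \<in> {-1,1} \<Longrightarrow> [int l = u*v*M1 + (1-v)*M1] (mod 4*M1)"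
      and cv: "r = 0 \<longrightarrow> u = 1" "r = 2*M1 \<longrightarrow> u = -1" for u
  proof -
    obtain v y where v: "v \<in> {-1,1}" and y: "[x - (1-v)*M2 = y] (mod 4*M2)" "-2*M2 < y" "y \<le> 0"
      using REPneg[OF M2p] by blast
    have y2: "[x = y + (1-v)*M2] (mod 4*M2)" using y(1) by (rule shift)
    show ?thesis
    proof (rule exI[of _ u], rule exI[of _ v], rule exI[of _ M1], rule exI[of _ y], intro conjI)
      show "[int l = u * v * M1 + (1 - v) * int m1] (mod 4 * int m1)" using c[OF v] unfolding M1_def .
      show "[int l - 2 * int \<rho> = y + (1 - v) * int m2] (mod 4 * int m2)" using y2 unfolding x_def M2_def .
      show "l mod (4 * m1) = 0 \<longrightarrow> u = 1" using conv0 cv by simp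
      show "l mod (4 * m1) = 2 * m1 \<longrightarrow> u = - 1" using conv2 cv by simp
    qed (use u v y M1p M2p in \<open>simp_all add: M1_def M2_def\<close>)
  qed
  consider "r < M1" | "r = M1" | "M1 < r \<and> r < 2*M1" | "2*M1 \<le> r \<and> r < 3*M1" | "r = 3*M1"
    | "3*M1 < r" by linarith
  then show ?thesis
  proof cases
    case 1
    have c: "[int l = 1*1*r + (1-1)*M1] (mod 4*M1)" by (rule C1) simp
    show ?thesis by (rule main[OF _ _ _ _ c]) (use 1 r0 in auto)
  next
    case 2
    have c: "[int l = 1*v*M1 + (1-v)*M1] (mod 4*M1)" if "v \<in> {-1,1}" for v
      by (rule C1) (use 2 that in \<open>auto simp: algebra_simps\<close>)
    show ?thesis by (rule mainM[OF _ c]) (use 2 M1p in auto)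
  next
    case 3
    have c: "[int l = 1*(-1)*(2*M1 - r) + (1-(-1))*M1] (mod 4*M1)" by (rule C1) simp
    show ?thesis by (rule main[OF _ _ _ _ c]) (use 3 r0 in auto)
  next
    case 4
    have c: "[int l = (-1)*(-1)*(r - 2*M1) + (1-(-1))*M1] (mod 4*M1)" by (rule C1) simp
    show ?thesis by (rule main[OF _ _ _ _ c]) (use 4 r0 M1p in auto)
  next
    case 5
    have c: "[int l = (-1)*v*M1 + (1-v)*M1] (mod 4*M1)" if "v \<in> {-1,1}" for v
      by (rule C1) (use 5 that in \<open>auto simp: algebra_simps\<close>)
    show ?thesis by (rule mainM[OF _ c]) (use 5 M1p in auto)
  next
    case 6
    have c: "[int l = (-1)*1*(4*M1 - r) + (1-1)*M1] (mod 4*M1)" by (rule C1) simp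
    show ?thesis by (rule main[OF _ _ _ _ c]) (use 6 r0 M1p in auto)
  qed
qed


lemma NODE:
  assumes "u \<in> {-1,1}" "v \<in> {-1,1}" "0 \<le> i1" "i1 \<le> int m1"
     "-2*int m2 < i2" "i2 \<le> 2*int m2" "i1 = int m1 \<longrightarrow> i2 \<le> 0"
     "[int l = u*v*i1 + (1-v)*int m1] (mod 4*int m1)"
     "[int l - 2*int \<rho> = i2 + (1-v)*int m2] (mod 4*int m2)"
  shows "(i1, i2) \<in> nodeI m1 m2"
proof -
  have "even (int l - i1)" using PAR1[OF assms(1,2,8)] .
  moreover have "even (int l - i2)" using PAR2[OF assms(2,9)] .
  ultimately have "even (i1 + i2)" by presburger
  then show ?thesis using assms unfolding nodeI_def by auto
qed

lemma UV:
  assumes m: "0 < m1" "0 < m2"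
    and uv: "u \<in> {-1,1}" "v \<in> {-1,1}" "u' \<in> {-1,1}" "v' \<in> {-1,1}"
    and i: "i \<in> nodeI m1 m2" "i' \<in> nodeI m1 m2"
    and c: "cong_rel m1 m2 l \<rho> i u v" "cong_rel m1 m2 l \<rho> i' u' v'"
  shows "i = i' \<and> v = v' \<and> (u \<noteq> u' \<longrightarrow> fst i = 0)"
proof -
  have m1': "0 < int m1" and m2': "0 < int m2" using m by auto
  obtain i1 i2 where ii: "i = (i1, i2)" by (cases i)
  obtain i1' i2' where ii': "i' = (i1', i2')" by (cases i')
  have r: "0 \<le> i1" "i1 \<le> int m1" "-2*int m2 < i2" "i2 \<le> 2*int m2" "i1 = int m1 \<longrightarrow> i2 \<le> 0"
    using i(1) unfolding ii nodeI_def by auto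
  have r': "0 \<le> i1'" "i1' \<le> int m1" "-2*int m2 < i2'" "i2' \<le> 2*int m2" "i1' = int m1 \<longrightarrow> i2' \<le> 0"
    using i(2) unfolding ii' nodeI_def by auto
  have a1: "[int l = u*v*i1 + (1-v)*int m1] (mod 4*int m1)"
    and a2: "[int l - 2*int \<rho> = i2 + (1-v)*int m2] (mod 4*int m2)"
    using c(1) EQ[OF uv(1,2)] unfolding ii by auto
  have b1: "[int l = u'*v'*i1' + (1-v')*int m1] (mod 4*int m1)"
    and b2: "[int l - 2*int \<rho> = i2' + (1-v')*int m2] (mod 4*int m2)"
    using c(2) EQ[OF uv(3,4)] unfolding ii' by auto
  have "[u*v*i1 + (1-v)*int m1 = u'*v'*i1' + (1-v')*int m1] (mod 4*int m1)"
    using a1 b1 by (meson cong_sym cong_trans)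
  from FC[OF m1' uv r(1,2) r'(1,2) this]
  have f: "i1 = i1' \<and> (v \<noteq> v' \<longrightarrow> i1 = int m1) \<and> (v = v' \<and> u \<noteq> u' \<longrightarrow> i1 = 0)" .
  have "[i2 + (1-v)*int m2 = i2' + (1-v')*int m2] (mod 4*int m2)"
    using a2 b2 by (meson cong_sym cong_trans)
  from SC[OF m2' uv(2,4) r(3,4) r'(3,4) this]
  have g: "(v = v' \<longrightarrow> i2 = i2') \<and> (v \<noteq> v' \<longrightarrow> \<not> (i2 \<le> 0 \<and> i2' \<le> 0))" .
  have vv: "v = v'" using f g r(5) r'(5) by auto
  then show ?thesis using f g ii ii' by auto
qed

lemma CONV:
  assumes m: "0 < m1" and v: "v \<in> {-1,1}" and c: "[int l = (1-v)*int m1] (mod 4*int m1)"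
  shows "(v = 1 \<longrightarrow> l mod (4*m1) = 0) \<and> (v = -1 \<longrightarrow> l mod (4*m1) = 2*m1)"
proof -
  have e: "int (l mod (4*m1)) = ((1-v)*int m1) mod (4*int m1)"
    using c unfolding cong_def by (simp add: of_nat_mod)
  show ?thesis
  proof (intro conjI impI)
    assume "v = 1" then show "l mod (4*m1) = 0" using e by simp
  next
    assume "v = -1"
    then have "int (l mod (4*m1)) = (2*int m1) mod (4*int m1)" using e by simp
    also have "\<dots> = 2*int m1" using m by simp
    finally show "l mod (4*m1) = 2*m1" by linarith
  qed
qed

theorem proposition9p1:
  fixes m1 m2 :: nat
  assumes "0 < m1" and "0 < m2"
  shows
    "(\<forall>(l, \<rho>)\<in>paramD m1 m2. \<exists>i\<in>nodeI m1 m2. attached m1 m2 l \<rho> i)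
   \<and> (\<forall>(l, \<rho>)\<in>paramD m1 m2. \<forall>i\<in>nodeI m1 m2. \<forall>i'\<in>nodeI m1 m2.
        attached m1 m2 l \<rho> i \<and> attached m1 m2 l \<rho> i' \<longrightarrow> i = i')
   \<and> (\<forall>i\<in>nodeI m1 m2. \<exists>(l, \<rho>)\<in>paramD m1 m2. attached m1 m2 l \<rho> i)
   \<and> (\<forall>(l, \<rho>)\<in>paramD m1 m2. \<forall>i\<in>nodeI m1 m2. attached m1 m2 l \<rho> i \<longrightarrow>
        ((i \<in> nodeI0 m1 m2 \<longleftrightarrow> even l) \<and> (i \<in> nodeI1 m1 m2 \<longleftrightarrow> odd l)))
   \<and> (\<forall>(l, \<rho>)\<in>paramD m1 m2. \<exists>!uv :: int \<times> int.
        fst uv \<in> {-1, 1} \<and> snd uv \<in> {-1, 1}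
        \<and> (l mod (4 * m1) = 0 \<longrightarrow> fst uv = 1)
        \<and> (l mod (4 * m1) = 2 * m1 \<longrightarrow> fst uv = -1)
        \<and> (\<exists>i\<in>nodeI m1 m2. cong_rel m1 m2 l \<rho> i (fst uv) (snd uv)))
   \<and> (\<forall>i\<in>nodeI m1 m2.
        (0 < fst i \<and> fst i \<le> int m1 \<longrightarrow>
           card {p \<in> paramD m1 m2. attached m1 m2 (fst p) (snd p) i} = 4)
      \<and> (fst i = 0 \<longrightarrow>
           card {p \<in> paramD m1 m2. attached m1 m2 (fst p) (snd p) i} = 2))"
proof -
  have m: "0 < m1" "0 < m2" using assms by auto
  have P1: "\<exists>i\<in>nodeI m1 m2. attached m1 m2 l \<rho> i" for l \<rho>
  proof -
    obtain u v i1 i2 where H: "u \<in> {-1,1}" "v \<in> {-1,1}" "0 \<le> i1" "i1 \<le> int m1"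
     "-2*int m2 < i2" "i2 \<le> 2*int m2" "i1 = int m1 \<longrightarrow> i2 \<le> 0"
     "[int l = u*v*i1 + (1-v)*int m1] (mod 4*int m1)"
     "[int l - 2*int \<rho> = i2 + (1-v)*int m2] (mod 4*int m2)"
      using EX1[OF m, of l \<rho>] by blast
    have n: "(i1, i2) \<in> nodeI m1 m2" by (rule NODE[OF H])
    have "cong_rel m1 m2 l \<rho> (i1, i2) u v" using EQ[OF H(1,2)] H(8,9) by simp
    then have "attached m1 m2 l \<rho> (i1, i2)" using H(1,2) unfolding attached_def by blast
    then show ?thesis using n by blast
  qed
  have P2: "i = i'" if a: "i \<in> nodeI m1 m2" "i' \<in> nodeI m1 m2"
    "attached m1 m2 l \<rho> i" "attached m1 m2 l \<rho> i'" for l \<rho> i i'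
  proof -
    obtain u v where uv: "u \<in> {-1,1}" "v \<in> {-1,1}" "cong_rel m1 m2 l \<rho> i u v"
      using a(3) unfolding attached_def by blast
    obtain u' v' where uv': "u' \<in> {-1,1}" "v' \<in> {-1,1}" "cong_rel m1 m2 l \<rho> i' u' v'"
      using a(4) unfolding attached_def by blast
    show ?thesis using UV[OF m uv(1,2) uv'(1,2) a(1,2) uv(3) uv'(3)] by blast
  qed
  have P3: "\<exists>p\<in>paramD m1 m2. attached m1 m2 (fst p) (snd p) i" if i: "i \<in> nodeI m1 m2" for i
  proof -
    obtain i1 i2 where ii: "i = (i1, i2)" by (cases i)
    have "even (i1 + i2)" using i unfolding ii nodeI_def by auto
    then have "even (i1 - i2)" by presburger
    then obtain p where p: "p \<in> paramD m1 m2" "[int (fst p) = i1] (mod 4*int m1)"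
      "[int (fst p) - 2*int (snd p) = i2] (mod 4*int m2)"
      using KL[OF m] by blast
    have "cong_rel m1 m2 (fst p) (snd p) i 1 1" using EQ[of 1 1] p unfolding ii by simp
    then have "attached m1 m2 (fst p) (snd p) i" unfolding attached_def by blast
    then show ?thesis using p(1) by blast
  qed
  have P4: "even (fst i) = even l \<and> even (snd i) = even l"
    if a: "attached m1 m2 l \<rho> i" for l \<rho> i
  proof -
    obtain u v where uv: "u \<in> {-1,1}" "v \<in> {-1,1}" "cong_rel m1 m2 l \<rho> i u v"
      using a unfolding attached_def by blast
    have c: "[int l = u*v*fst i + (1-v)*int m1] (mod 4*int m1)"
      "[int l - 2*int \<rho> = snd i + (1-v)*int m2] (mod 4*int m2)"
      using EQ[OF uv(1,2)] uv(3) by auto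
    have "even (int l - fst i)" by (rule PAR1[OF uv(1,2) c(1)])
    moreover have "even (int l - snd i)" by (rule PAR2[OF uv(2) c(2)])
    moreover have "even (int l) = even l" by simp
    ultimately show ?thesis by presburger
  qed
  have P5: "\<exists>!uv :: int \<times> int.
        fst uv \<in> {-1, 1} \<and> snd uv \<in> {-1, 1}
        \<and> (l mod (4 * m1) = 0 \<longrightarrow> fst uv = 1)
        \<and> (l mod (4 * m1) = 2 * m1 \<longrightarrow> fst uv = -1)
        \<and> (\<exists>i\<in>nodeI m1 m2. cong_rel m1 m2 l \<rho> i (fst uv) (snd uv))" for l \<rho>
  proof -
    obtain u v i1 i2 where H: "u \<in> {-1,1}" "v \<in> {-1,1}" "0 \<le> i1" "i1 \<le> int m1"
     "-2*int m2 < i2" "i2 \<le> 2*int m2" "i1 = int m1 \<longrightarrow> i2 \<le> 0"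
     "[int l = u*v*i1 + (1-v)*int m1] (mod 4*int m1)"
     "[int l - 2*int \<rho> = i2 + (1-v)*int m2] (mod 4*int m2)"
     "l mod (4*m1) = 0 \<longrightarrow> u = 1" "l mod (4*m1) = 2*m1 \<longrightarrow> u = -1"
      using EX1[OF m, of l \<rho>] apply - apply (elim exE conjE) apply (rule that) by assumption+
    have n: "(i1, i2) \<in> nodeI m1 m2" by (rule NODE[OF H(1-9)])
    have cr: "cong_rel m1 m2 l \<rho> (i1, i2) u v" using EQ[OF H(1,2)] H(8,9) by simp
    show ?thesis
    proof (rule ex1I[of _ "(u, v)"])
      show "fst (u, v) \<in> {-1, 1} \<and> snd (u, v) \<in> {-1, 1}
        \<and> (l mod (4 * m1) = 0 \<longrightarrow> fst (u, v) = 1)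
        \<and> (l mod (4 * m1) = 2 * m1 \<longrightarrow> fst (u, v) = -1)
        \<and> (\<exists>i\<in>nodeI m1 m2. cong_rel m1 m2 l \<rho> i (fst (u, v)) (snd (u, v)))"
        using H(1,2,10,11) n cr by auto
    next
      fix uv :: "int \<times> int"
      assume a: "fst uv \<in> {-1, 1} \<and> snd uv \<in> {-1, 1}
        \<and> (l mod (4 * m1) = 0 \<longrightarrow> fst uv = 1)
        \<and> (l mod (4 * m1) = 2 * m1 \<longrightarrow> fst uv = -1)
        \<and> (\<exists>i\<in>nodeI m1 m2. cong_rel m1 m2 l \<rho> i (fst uv) (snd uv))"
      then obtain i' where i': "i' \<in> nodeI m1 m2" "cong_rel m1 m2 l \<rho> i' (fst uv) (snd uv)" by blast
      have a12: "fst uv \<in> {-1,1}" "snd uv \<in> {-1,1}" using a by auto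
      have U: "(i1, i2) = i' \<and> v = snd uv \<and> (u \<noteq> fst uv \<longrightarrow> fst (i1, i2) = 0)"
        by (rule UV[OF m H(1,2) a12 n i'(1) cr i'(2)])
      have "u = fst uv"
      proof (rule ccontr)
        assume ne: "u \<noteq> fst uv"
        then have "i1 = 0" using U by simp
        then have "[int l = (1-v)*int m1] (mod 4*int m1)" using H(8) by simp
        from CONV[OF m(1) H(2) this] have cv:
          "(v = 1 \<longrightarrow> l mod (4*m1) = 0) \<and> (v = -1 \<longrightarrow> l mod (4*m1) = 2*m1)" .
        show False using cv ne H(2,10,11) a by auto
      qed
      then show "uv = (u, v)" using U by (cases uv) auto
    qed
  qed
  have P6: "card {p \<in> paramD m1 m2. attached m1 m2 (fst p) (snd p) i} = (if fst i = 0 then 2 else 4)"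
    if i: "i \<in> nodeI m1 m2" for i
  proof -
    obtain i1 i2 where ii: "i = (i1, i2)" by (cases i)
    have ev: "even (i1 + i2)" using i unfolding ii nodeI_def by auto
    define Q where "Q u v p \<longleftrightarrow> p \<in> paramD m1 m2
      \<and> [int (fst p) = u*v*i1 + (1-v)*int m1] (mod 4*int m1)
      \<and> [int (fst p) - 2*int (snd p) = i2 + (1-v)*int m2] (mod 4*int m2)" for u v p
    have ex: "\<exists>!p. Q u v p" if "u \<in> {-1,1}" "v \<in> {-1,1}" for u v
    proof -
      have "even ((u*v*i1 + (1-v)*int m1) - (i2 + (1-v)*int m2))"
        using that ev by (auto; presburger)
      then show ?thesis unfolding Q_def by (rule KL[OF m])
    qed
    define q where "q u v = (THE p. Q u v p)" for u v
    have qQ: "Q u v (q u v)" if "u \<in> {-1,1}" "v \<in> {-1,1}" for u v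
      unfolding q_def using ex[OF that] by (rule theI')
    have qU: "p = q u v" if "u \<in> {-1,1}" "v \<in> {-1,1}" "Q u v p" for u v p
      unfolding q_def using ex[OF that(1,2)] that(3) by (simp add: the1_equality)
    have QC: "Q u v p \<longleftrightarrow> p \<in> paramD m1 m2 \<and> cong_rel m1 m2 (fst p) (snd p) i u v"
      if "u \<in> {-1,1}" "v \<in> {-1,1}" for u v p
      unfolding Q_def using EQ[OF that] ii by simp
    have F: "{p \<in> paramD m1 m2. attached m1 m2 (fst p) (snd p) i}
        = (\<lambda>(u,v). q u v) ` ({-1,1} \<times> {-1,1})"
    proof (intro equalityI subsetI)
      fix p assume "p \<in> {p \<in> paramD m1 m2. attached m1 m2 (fst p) (snd p) i}"
      then obtain u v where uv: "u \<in> {-1,1}" "v \<in> {-1,1}" "p \<in> paramD m1 m2"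
        "cong_rel m1 m2 (fst p) (snd p) i u v" unfolding attached_def by blast
      have pq: "p = q u v" using qU[OF uv(1,2)] QC[OF uv(1,2)] uv(3,4) by blast
      have mem: "(u, v) \<in> {-1,1} \<times> {-1,1}" using uv(1,2) by blast
      show "p \<in> (\<lambda>(u,v). q u v) ` ({-1,1} \<times> {-1,1})"
        by (rule image_eqI[of _ _ "(u,v)", OF _ mem]) (simp add: pq)
    next
      fix p assume "p \<in> (\<lambda>(u,v). q u v) ` ({-1,1} \<times> {-1,1})"
      then obtain w where w: "w \<in> {-1,1} \<times> {-1,1}" "p = (\<lambda>(u,v). q u v) w" by (rule imageE)
      obtain u v where wuv: "w = (u, v)" by (cases w)
      have uv: "u \<in> {-1,1}" "v \<in> {-1,1}" "p = q u v"
        using w unfolding wuv by (auto dest: SigmaD1 SigmaD2)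
      have "Q u v p" using qQ[OF uv(1,2)] uv(3) by simp
      then have "p \<in> paramD m1 m2 \<and> cong_rel m1 m2 (fst p) (snd p) i u v"
        by (simp only: QC[OF uv(1,2)])
      then show "p \<in> {p \<in> paramD m1 m2. attached m1 m2 (fst p) (snd p) i}"
        using uv(1,2) unfolding attached_def by blast
    qed
    have inj: "v = v' \<and> (u \<noteq> u' \<longrightarrow> i1 = 0)"
      if uv: "u \<in> {-1,1}" "v \<in> {-1,1}" "u' \<in> {-1,1}" "v' \<in> {-1,1}" and e: "q u v = q u' v'"
      for u v u' v'
    proof -
      have c1: "cong_rel m1 m2 (fst (q u v)) (snd (q u v)) i u v"
        using qQ[OF uv(1,2)] QC[OF uv(1,2)] by blast
      have c2: "cong_rel m1 m2 (fst (q u v)) (snd (q u v)) i u' v'"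
        using qQ[OF uv(3,4)] QC[OF uv(3,4)] e by simp
      show ?thesis using UV[OF m uv i i c1 c2] ii by simp
    qed
    show ?thesis
    proof (cases "i1 = 0")
      case False
      have "inj_on (\<lambda>(u,v). q u v) ({-1,1} \<times> {-1,1})"
      proof (rule inj_onI, clarify)
        fix u v u' v' :: int
        assume "u \<in> {-1,1}" "v \<in> {-1,1}" "u' \<in> {-1,1}" "v' \<in> {-1,1}" "q u v = q u' v'"
        from inj[OF this] False show "u = u' \<and> v = v'" by blast
      qed
      then have "card ((\<lambda>(u,v). q u v) ` ({-1,1} \<times> {-1,1})) = card ({-1,1::int} \<times> {-1,1::int})"
        by (rule card_image)
      then show ?thesis using F False ii by simp
    next
      case True
      have qe: "q (-1) v = q 1 v" for v unfolding q_def Q_def using True by simp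
      have s1: "{-1,1} \<times> {-1,1} = {(-1,-1),(-1,1),(1,-1),(1,1::int)}" by auto
      have s2: "{1} \<times> {-1,1} = {(1,-1),(1,1::int)}" by auto
      have "(\<lambda>(u,v). q u v) ` ({-1,1} \<times> {-1,1}) = (\<lambda>(u,v). q u v) ` ({1} \<times> {-1,1})"
        unfolding s1 s2 using qe by auto
      moreover have "inj_on (\<lambda>(u,v). q u v) ({1::int} \<times> {-1,1})"
      proof (rule inj_onI)
        fix x y assume x: "x \<in> {1::int} \<times> {-1,1}" and y: "y \<in> {1::int} \<times> {-1,1}"
          and e: "(\<lambda>(u,v). q u v) x = (\<lambda>(u,v). q u v) y"
        obtain a b where xa: "x = (a, b)" by (cases x)
        obtain c d where yc: "y = (c, d)" by (cases y)
        have a1: "a = 1" "b \<in> {-1,1}" using x unfolding xa by (auto dest: SigmaD1 SigmaD2)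
        have c1: "c = 1" "d \<in> {-1,1}" using y unfolding yc by (auto dest: SigmaD1 SigmaD2)
        have e': "q 1 b = q 1 d" using e a1 c1 unfolding xa yc by simp
        have "(1::int) \<in> {-1,1}" by simp
        from inj[OF this a1(2) this c1(2) e'] have "b = d" by blast
        then show "x = y" using xa yc a1 c1 by simp
      qed
      then have "card ((\<lambda>(u,v). q u v) ` ({1} \<times> {-1,1})) = card ({1::int} \<times> {-1,1::int})"
        by (rule card_image)
      ultimately show ?thesis using F True ii by simp
    qed
  qed
  show ?thesis
  proof (intro conjI)
    show "\<forall>(l, \<rho>)\<in>paramD m1 m2. \<exists>i\<in>nodeI m1 m2. attached m1 m2 l \<rho> i" using P1 by blast
    show "\<forall>(l, \<rho>)\<in>paramD m1 m2. \<forall>i\<in>nodeI m1 m2. \<forall>i'\<in>nodeI m1 m2.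
        attached m1 m2 l \<rho> i \<and> attached m1 m2 l \<rho> i' \<longrightarrow> i = i'" using P2 by blast
    show "\<forall>i\<in>nodeI m1 m2. \<exists>(l, \<rho>)\<in>paramD m1 m2. attached m1 m2 l \<rho> i"
      using P3 by fastforce
    show "\<forall>(l, \<rho>)\<in>paramD m1 m2. \<forall>i\<in>nodeI m1 m2. attached m1 m2 l \<rho> i \<longrightarrow>
        ((i \<in> nodeI0 m1 m2 \<longleftrightarrow> even l) \<and> (i \<in> nodeI1 m1 m2 \<longleftrightarrow> odd l))"
      using P4 unfolding nodeI0_def nodeI1_def by auto
    show "\<forall>(l, \<rho>)\<in>paramD m1 m2. \<exists>!uv :: int \<times> int.
        fst uv \<in> {-1, 1} \<and> snd uv \<in> {-1, 1}
        \<and> (l mod (4 * m1) = 0 \<longrightarrow> fst uv = 1)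
        \<and> (l mod (4 * m1) = 2 * m1 \<longrightarrow> fst uv = -1)
        \<and> (\<exists>i\<in>nodeI m1 m2. cong_rel m1 m2 l \<rho> i (fst uv) (snd uv))"
    proof (intro ballI)
      fix x assume "x \<in> paramD m1 m2"
      obtain l \<rho> where x: "x = (l, \<rho>)" by (cases x)
      show "case x of (l, \<rho>) \<Rightarrow> \<exists>!uv :: int \<times> int.
        fst uv \<in> {-1, 1} \<and> snd uv \<in> {-1, 1}
        \<and> (l mod (4 * m1) = 0 \<longrightarrow> fst uv = 1)
        \<and> (l mod (4 * m1) = 2 * m1 \<longrightarrow> fst uv = -1)
        \<and> (\<exists>i\<in>nodeI m1 m2. cong_rel m1 m2 l \<rho> i (fst uv) (snd uv))"
        unfolding x using P5[of l \<rho>] by simp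
    qed
    show "\<forall>i\<in>nodeI m1 m2.
        (0 < fst i \<and> fst i \<le> int m1 \<longrightarrow>
           card {p \<in> paramD m1 m2. attached m1 m2 (fst p) (snd p) i} = 4)
      \<and> (fst i = 0 \<longrightarrow>
           card {p \<in> paramD m1 m2. attached m1 m2 (fst p) (snd p) i} = 2)"
      using P6 by auto
  qed
qed

end
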